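(* Let $E\in M_n(\mathbb{FT})$ be an idempotent of rank $n$ and let $H_E$ be its $\mathcal H$-class in $M_n(\mathbb{FT})$. Then there exists $x\in C(E)$ which is an eigenvector of every $A\in H_E$, i.e. for every $A\in H_E$ there is $\lambda\in\mathbb{R}$ with $A\otimes x=\lambda\otimes x$.
   Context: $\mathbb{FT}$ is $\mathbb{R}$ with $a\oplus b=\max(a,b)$, $a\otimes b=a+b$; $M_n(\mathbb{FT})$ is the semigroup of real $n\times n$ matrices under $(A\otimes B)_{i,j}=\max_k(A_{i,k}+B_{k,j})$, acting on $\mathbb{FT}^n$ similarly; $(\lambda\otimes x)_i=\lambda+x_i$. $C(E)$ is the set of finite componentwise maxima of columns of $E$ shifted by real constants; the rank of an idempotent $E$ is the minimal cardinality of a generating set of $C(E)$. Green's relations: $a\,\mathcal{R}\,b$ iff $aS^1=bS^1$, $a\,\mathcal{L}\,b$ iff $S^1a=S^1b$, $\mathcal{H}=\mathcal{L}\cap\mathcal{R}$. *)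

theory Defs
  imports Complex_Main
begin

text \<open>Tropical (max-plus) matrices of size n x n over the reals; the dimension n is
  the cardinality of the finite index type 'n.\<close>

type_synonym 'n tmat = "'n \<Rightarrow> 'n \<Rightarrow> real"
type_synonym 'n tvec = "'n \<Rightarrow> real"

definition tmult :: "('n::finite) tmat \<Rightarrow> 'n tmat \<Rightarrow> 'n tmat" where
  "tmult A B = (\<lambda>i j. Max (range (\<lambda>k. A i k + B k j)))"

definition tapply :: "('n::finite) tmat \<Rightarrow> 'n tvec \<Rightarrow> 'n tvec" where
  "tapply A x = (\<lambda>i. Max (range (\<lambda>k. A i k + x k)))"

definition tscal :: "real \<Rightarrow> 'n tvec \<Rightarrow> 'n tvec" where
  "tscal l x = (\<lambda>i. l + x i)"

definition tspan :: "('n tvec) set \<Rightarrow> ('n tvec) set" where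
  "tspan G = {x. \<exists>S c. finite S \<and> S \<noteq> {} \<and> S \<subseteq> G \<and>
                  x = (\<lambda>i. Max ((\<lambda>v. c v + v i) ` S))}"

definition colspace :: "('n::finite) tmat \<Rightarrow> ('n tvec) set" where
  "colspace E = tspan {(\<lambda>i. E i j) | j. True}"

definition trank :: "('n::finite) tmat \<Rightarrow> nat" where
  "trank E = (LEAST k. \<exists>G. finite G \<and> card G = k \<and> tspan G = colspace E)"

text \<open>Green's relations in the semigroup M_n(FT) (S^1 = S with an identity adjoined).\<close>
definition green_R :: "('n::finite) tmat \<Rightarrow> 'n tmat \<Rightarrow> bool" where
  "green_R A B \<longleftrightarrow> insert A (range (tmult A)) = insert B (range (tmult B))"

definition green_L :: "('n::finite) tmat \<Rightarrow> 'n tmat \<Rightarrow> bool" where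
  "green_L A B \<longleftrightarrow> insert A (range (\<lambda>X. tmult X A)) = insert B (range (\<lambda>X. tmult X B))"

definition green_H :: "('n::finite) tmat \<Rightarrow> 'n tmat \<Rightarrow> bool" where
  "green_H A B \<longleftrightarrow> green_L A B \<and> green_R A B"

end

theory Submission
  imports Defs
begin

lemma mx_ge: "(f::'n::finite \<Rightarrow> real) k \<le> Max (range f)"
  by (rule Max_ge) auto

lemma mx_ex: "\<exists>k. Max (range (f::'n::finite \<Rightarrow> real)) = f k"
proof -
  have "Max (range f) \<in> range f" by (rule Max_in) auto
  thus ?thesis by (metis rangeE)
qed

lemma mx_le: "Max (range (f::'n::finite \<Rightarrow> real)) \<le> y \<longleftrightarrow> (\<forall>k. f k \<le> y)"
  by (subst Max_le_iff) auto

lemma mx_add: "Max (range (\<lambda>k. c + (f::'n::finite \<Rightarrow> real) k)) = c + Max (range f)"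
proof -
  obtain k where k: "Max (range f) = f k" using mx_ex by blast
  have 1: "Max (range (\<lambda>k. c + f k)) \<le> c + Max (range f)"
    unfolding mx_le using mx_ge[of f] by simp
  have 2: "c + Max (range f) \<le> Max (range (\<lambda>k. c + f k))"
    unfolding k using mx_ge[of "\<lambda>k. c + f k" k] by simp
  show ?thesis using 1 2 by (rule antisym)
qed

lemma mx_swap: "Max (range (\<lambda>k. Max (range (\<lambda>j. (g::'a::finite \<Rightarrow> 'b::finite \<Rightarrow> real) k j))))
   = Max (range (\<lambda>j. Max (range (\<lambda>k. g k j))))"
  apply (rule antisym)
   apply (simp add: mx_le)
   apply (meson mx_ge order_trans)
  apply (simp add: mx_le)
  apply (meson mx_ge order_trans)
  done

lemma tmult_assoc: "tmult (tmult A B) C = tmult A (tmult (B::('n::finite) tmat) C)"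
proof (intro ext)
  fix i j
  have "tmult (tmult A B) C i j = Max (range (\<lambda>l. C l j + Max (range (\<lambda>k. A i k + B k l))))"
    unfolding tmult_def by (simp add: add.commute)
  also have "\<dots> = Max (range (\<lambda>l. Max (range (\<lambda>k. A i k + B k l + C l j))))"
    by (subst mx_add[symmetric]) (simp add: add.commute add.left_commute)
  also have "\<dots> = Max (range (\<lambda>k. Max (range (\<lambda>l. A i k + B k l + C l j))))"
    by (rule mx_swap[symmetric])
  also have "\<dots> = tmult A (tmult B C) i j"
    unfolding tmult_def by (subst mx_add[symmetric]) (simp add: add.assoc)
  finally show "tmult (tmult A B) C i j = tmult A (tmult B C) i j" .
qed

lemma tapply_tmult: "tapply A (tapply E c) = tapply (tmult A (E::('n::finite) tmat)) c"
proof (intro ext)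
  fix i
  have "tapply A (tapply E c) i = Max (range (\<lambda>k. A i k + Max (range (\<lambda>j. E k j + c j))))"
    unfolding tapply_def by simp
  also have "\<dots> = Max (range (\<lambda>k. Max (range (\<lambda>j. A i k + E k j + c j))))"
    by (subst mx_add[symmetric]) (simp add: add.assoc)
  also have "\<dots> = Max (range (\<lambda>j. Max (range (\<lambda>k. A i k + E k j + c j))))"
    by (rule mx_swap)
  also have "\<dots> = tapply (tmult A E) c i"
    unfolding tapply_def tmult_def
    by (subst (2) add.commute, subst mx_add[symmetric]) (simp add: add.commute add.left_commute)
  finally show "tapply A (tapply E c) i = tapply (tmult A E) c i" .
qed


lemma ent: "tmult A B = C \<Longrightarrow> C i j = Max (range (\<lambda>k. A i k + B k (j::'n::finite)))"
  unfolding tmult_def by (auto dest: fun_cong)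

lemma ent_le: "tmult A B = C \<Longrightarrow> A i k + B k j \<le> C i (j::'n::finite)"
  using ent[of A B C i j] mx_ge[of "\<lambda>k. A i k + B k j" k] by simp

lemma H_facts:
  fixes A E :: "('n::finite) tmat"
  assumes idem: "tmult E E = E" and H: "green_H A E"
  shows "tmult E A = A" "tmult A E = A" "\<exists>B. tmult A B = E \<and> tmult B A = E \<and> tmult E B = B \<and> tmult B E = B"
proof -
  have R: "insert A (range (tmult A)) = insert E (range (tmult E))"
    and L: "insert A (range (\<lambda>X. tmult X A)) = insert E (range (\<lambda>X. tmult X E))"
    using H unfolding green_H_def green_R_def green_L_def by auto
  have "A \<in> insert E (range (tmult E))" using R by blast
  then obtain X0 where X0: "A = tmult E X0" using idem by (metis image_iff insert_iff)
  show EA: "tmult E A = A" unfolding X0 by (simp add: tmult_assoc[symmetric] idem)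
  have "A \<in> insert E (range (\<lambda>X. tmult X E))" using L by blast
  then obtain Y0 where Y0: "A = tmult Y0 E" using idem by (metis image_iff insert_iff)
  show AE: "tmult A E = A" unfolding Y0 by (simp add: tmult_assoc idem)
  have "E \<in> insert A (range (tmult A))" using R by blast
  then obtain X where X: "tmult A X = E" using AE by (metis image_iff insert_iff)
  have "E \<in> insert A (range (\<lambda>X. tmult X A))" using L by blast
  then obtain Y where Y: "tmult Y A = E" using EA by (metis image_iff insert_iff)
  define B where "B = tmult E (tmult X E)"
  define Y' where "Y' = tmult E (tmult Y E)"
  have AB: "tmult A B = E" unfolding B_def
    by (metis tmult_assoc AE X idem)
  have YA: "tmult Y' A = E" unfolding Y'_def
    by (metis tmult_assoc EA Y idem)
  have "Y' = tmult Y' E" unfolding Y'_def by (simp add: tmult_assoc idem)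
  also have "\<dots> = tmult (tmult Y' A) B" using AB by (simp add: tmult_assoc)
  also have "\<dots> = B" unfolding YA B_def by (simp add: tmult_assoc[symmetric] idem)
  finally have "Y' = B" .
  with YA have BA: "tmult B A = E" by simp
  show "\<exists>B. tmult A B = E \<and> tmult B A = E \<and> tmult E B = B \<and> tmult B E = B"
  proof -
    have EB: "tmult E B = B" unfolding B_def by (simp add: tmult_assoc[symmetric] idem)
    have BE: "tmult B E = B" unfolding B_def by (simp add: tmult_assoc idem)
    show ?thesis using AB BA EB BE by blast
  qed
qed

lemma span_rep:
  fixes f :: "'k \<Rightarrow> 'n tvec"
  assumes fin: "finite K" and ne: "K \<noteq> {}"
  shows "(\<lambda>i. Max ((\<lambda>k. c k + f k i) ` K)) \<in> tspan (f ` K)"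
proof -
  define cf where "cf v = Max (c ` {k\<in>K. f k = v})" for v
  have cfge: "c k \<le> cf (f k)" if "k \<in> K" for k
    unfolding cf_def using fin that by (intro Max_ge) auto
  have cfin: "\<exists>k'\<in>K. f k' = f k \<and> cf (f k) = c k'" if "k \<in> K" for k
  proof -
    have "cf (f k) \<in> c ` {k'\<in>K. f k' = f k}" unfolding cf_def using fin that by (intro Max_in) auto
    thus ?thesis by auto
  qed
  have eq: "Max ((\<lambda>k. c k + f k i) ` K) = Max ((\<lambda>v. cf v + v i) ` (f ` K))" for i
  proof (rule antisym)
    show "Max ((\<lambda>k. c k + f k i) ` K) \<le> Max ((\<lambda>v. cf v + v i) ` (f ` K))"
    proof (rule Max.boundedI)
      show "finite ((\<lambda>k. c k + f k i) ` K)" using fin by simp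
      show "(\<lambda>k. c k + f k i) ` K \<noteq> {}" using ne by simp
      fix y assume "y \<in> (\<lambda>k. c k + f k i) ` K"
      then obtain k where k: "k \<in> K" "y = c k + f k i" by auto
      have "y \<le> cf (f k) + f k i" using cfge[OF k(1)] k(2) by simp
      also have "\<dots> \<le> Max ((\<lambda>v. cf v + v i) ` (f ` K))" using fin k(1) by (intro Max_ge) auto
      finally show "y \<le> Max ((\<lambda>v. cf v + v i) ` (f ` K))" .
    qed
  next
    show "Max ((\<lambda>v. cf v + v i) ` (f ` K)) \<le> Max ((\<lambda>k. c k + f k i) ` K)"
    proof (rule Max.boundedI)
      show "finite ((\<lambda>v. cf v + v i) ` (f ` K))" using fin by simp
      show "(\<lambda>v. cf v + v i) ` (f ` K) \<noteq> {}" using ne by simp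
      fix y assume "y \<in> (\<lambda>v. cf v + v i) ` (f ` K)"
      then obtain k where k: "k \<in> K" "y = cf (f k) + f k i" by auto
      obtain k' where k': "k' \<in> K" "f k' = f k" "cf (f k) = c k'" using cfin[OF k(1)] by blast
      have "y = c k' + f k' i" using k k' by simp
      also have "\<dots> \<le> Max ((\<lambda>k. c k + f k i) ` K)" using fin k'(1) by (intro Max_ge) auto
      finally show "y \<le> Max ((\<lambda>k. c k + f k i) ` K)" .
    qed
  qed
  show ?thesis unfolding tspan_def
    using fin ne eq by (intro CollectI exI[of _ "f ` K"] exI[of _ cf]) auto
qed

lemma cs_fix:
  fixes E :: "('n::finite) tmat"
  assumes idem: "tmult E E = E" and x: "x \<in> colspace E"
  shows "tapply E x = x"
proof -
  obtain S c where S: "finite S" "S \<noteq> {}" "S \<subseteq> {(\<lambda>i. E i j) | j. True}"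
    and xd: "x = (\<lambda>i. Max ((\<lambda>v. c v + v i) ` S))"
    using x unfolding colspace_def tspan_def by blast
  have vfix: "v i = Max (range (\<lambda>k. E i k + v k))" if vS: "v \<in> S" for v i
  proof -
    obtain m where "v = (\<lambda>i. E i m)" using S(3) vS by auto
    thus ?thesis using ent[OF idem, of i m] by simp
  qed
  have xk: "c v + v k \<le> x k" if "v \<in> S" for v k
    unfolding xd using S that by (intro Max_ge) auto
  show ?thesis
  proof (intro ext antisym)
    fix i
    show "tapply E x i \<le> x i" unfolding tapply_def mx_le
    proof
      fix k
      have "Max ((\<lambda>v. c v + v k) ` S) \<in> (\<lambda>v. c v + v k) ` S" using S by (intro Max_in) auto
      then obtain v where v: "v \<in> S" "x k = c v + v k" unfolding xd by auto
      have "E i k + x k = c v + (E i k + v k)" using v by simp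
      also have "\<dots> \<le> c v + v i" using vfix[OF v(1), of i] mx_ge[of "\<lambda>k. E i k + v k" k] by simp
      also have "\<dots> \<le> x i" by (rule xk[OF v(1)])
      finally show "E i k + x k \<le> x i" .
    qed
  next
    fix i
    show "x i \<le> tapply E x i" unfolding xd
    proof (rule Max.boundedI)
      show "finite ((\<lambda>v. c v + v i) ` S)" using S by simp
      show "(\<lambda>v. c v + v i) ` S \<noteq> {}" using S by simp
      fix y assume "y \<in> (\<lambda>v. c v + v i) ` S"
      then obtain v where v: "v \<in> S" "y = c v + v i" by auto
      obtain k where k: "Max (range (\<lambda>k. E i k + v k)) = E i k + v k" using mx_ex by blast
      have "y = E i k + (c v + v k)" using v vfix[OF v(1), of i] k by simp
      also have "\<dots> \<le> E i k + x k" using xk[OF v(1)] by simp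
      also have "\<dots> \<le> tapply E x i" unfolding tapply_def by (rule mx_ge[of "\<lambda>k. E i k + x k"])
      finally show "y \<le> tapply E (\<lambda>i. Max ((\<lambda>v. c v + v i) ` S)) i" using xd by simp
    qed
  qed
qed


lemma Rk:
  fixes E :: "('n::finite) tmat" and d :: "'n tvec"
  assumes idem: "tmult E E = E" and rk: "trank E = card (UNIV :: 'n set)"
    and h1: "\<forall>i. \<exists>k. k \<noteq> j \<and> E i j \<le> E i k + d k"
    and h2: "\<forall>k. d k \<le> E k j"
  shows False
proof -
  define K where "K = UNIV - {j}"
  define Oth where "Oth = (\<lambda>k. (\<lambda>i. E i k)) ` K"
  obtain k0 where k0: "k0 \<noteq> j" using h1 by blast
  have Kne: "K \<noteq> {}" using k0 K_def by auto
  have finK: "finite K" by simp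
  have sub: "tspan Oth \<subseteq> colspace E"
  proof
    fix x assume "x \<in> tspan Oth"
    then obtain S c where "finite S" "S \<noteq> {}" "S \<subseteq> Oth" "x = (\<lambda>i. Max ((\<lambda>v. c v + v i) ` S))"
      unfolding tspan_def by blast
    moreover have "Oth \<subseteq> {(\<lambda>i. E i j) | j. True}" unfolding Oth_def by blast
    ultimately show "x \<in> colspace E" unfolding colspace_def tspan_def by blast
  qed
  have sup: "colspace E \<subseteq> tspan Oth"
  proof
    fix x assume x: "x \<in> colspace E"
    have fx: "tapply E x = x" by (rule cs_fix[OF idem x])
    have xe: "x i = Max (range (\<lambda>k. E i k + x k))" for i
      using fun_cong[OF fx, of i] unfolding tapply_def by simp
    have eq: "x i = Max ((\<lambda>k. x k + E i k) ` K)" for i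
    proof (rule antisym)
      show "x i \<le> Max ((\<lambda>k. x k + E i k) ` K)"
        unfolding xe[of i] mx_le
      proof
        fix k
        show "E i k + x k \<le> Max ((\<lambda>k. x k + E i k) ` K)"
        proof (cases "k = j")
          case False
          then have "x k + E i k \<le> Max ((\<lambda>k. x k + E i k) ` K)"
            using finK K_def by (intro Max_ge) auto
          then show ?thesis by (simp add: add.commute)
        next
          case True
          obtain k' where k': "k' \<noteq> j" "E i j \<le> E i k' + d k'" using h1 by blast
          have xk': "E k' j + x j \<le> x k'" using xe[of k'] mx_ge[of "\<lambda>m. E k' m + x m" j] by simp
          have dk: "d k' \<le> E k' j" using h2 by blast
          have "E i k + x k = E i j + x j" using True by simp
          also have "\<dots> \<le> x k' + E i k'" using k'(2) dk xk' by linarith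
          also have "\<dots> \<le> Max ((\<lambda>k. x k + E i k) ` K)" using finK k'(1) unfolding K_def by (intro Max_ge) auto
          finally show ?thesis .
        qed
      qed
    next
      show "Max ((\<lambda>k. x k + E i k) ` K) \<le> x i"
      proof (rule Max.boundedI)
        show "finite ((\<lambda>k. x k + E i k) ` K)" using finK by (rule finite_imageI)
        show "(\<lambda>k. x k + E i k) ` K \<noteq> {}" using Kne by blast
        fix y assume "y \<in> (\<lambda>k. x k + E i k) ` K"
        then obtain k where "y = x k + E i k" by blast
        moreover have "E i k + x k \<le> x i" using xe[of i] mx_ge[of "\<lambda>k. E i k + x k" k] by simp
        ultimately show "y \<le> x i" by simp
      qed
    qed
    have "(\<lambda>i. Max ((\<lambda>k. x k + E i k) ` K)) \<in> tspan Oth"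
      unfolding Oth_def by (rule span_rep[OF finK Kne])
    moreover have "x = (\<lambda>i. Max ((\<lambda>k. x k + E i k) ` K))" using eq by (intro ext)
    ultimately show "x \<in> tspan Oth" by simp
  qed
  have eqO: "tspan Oth = colspace E" using sub sup by (rule antisym)
  have finO: "finite Oth" unfolding Oth_def by simp
  have "trank E \<le> card Oth"
    unfolding trank_def by (rule Least_le) (use eqO finO in blast)
  also have "\<dots> \<le> card K" unfolding Oth_def by (rule card_image_le[OF finK])
  also have "\<dots> = card (UNIV :: 'n set) - 1" unfolding K_def by (simp add: card_Diff_singleton)
  finally have le: "trank E \<le> card (UNIV :: 'n set) - 1" .
  have pos: "card (UNIV :: 'n set) > 0" by (simp add: card_gt_0_iff)
  show False using le pos rk by linarith
qed

lemma Ext: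
  fixes E :: "('n::finite) tmat" and w :: "'n \<Rightarrow> 'n tvec"
  assumes idem: "tmult E E = E" and rk: "trank E = card (UNIV :: 'n set)" and diag: "\<forall>j. E j j = 0"
   and fx: "\<forall>m. tapply E (w m) = w m" and le: "\<forall>m i. w m i \<le> E i j" and cov: "\<forall>i. \<exists>m. E i j \<le> w m i"
  shows "\<exists>m. \<forall>i. w m i = E i j"
proof (cases "\<exists>m. w m j \<ge> 0")
  case True
  then obtain m where m: "w m j \<ge> 0" by blast
  have we: "w m i = Max (range (\<lambda>k. E i k + w m k))" for i
    using fun_cong[OF fx[rule_format, of m], of i] unfolding tapply_def by simp
  have "w m i \<ge> E i j" for i using we[of i] mx_ge[of "\<lambda>k. E i k + w m k" j] m by linarith
  thus ?thesis using le by (meson antisym)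
next
  case False
  hence neg: "\<forall>m. w m j < 0" by (auto simp: not_le)
  define d where "d l = Max (range (\<lambda>m. w m l))" for l
  have h2: "\<forall>k. d k \<le> E k j" unfolding d_def mx_le using le by simp
  have h1: "\<forall>i. \<exists>k. k \<noteq> j \<and> E i j \<le> E i k + d k"
  proof
    fix i
    obtain m where m: "E i j \<le> w m i" using cov by blast
    have we: "w m i = Max (range (\<lambda>k. E i k + w m k))"
      using fun_cong[OF fx[rule_format, of m], of i] unfolding tapply_def by simp
    obtain k where k: "w m i = E i k + w m k" using we mx_ex by metis
    have "w m k \<le> d k" unfolding d_def by (rule mx_ge[of "\<lambda>m. w m k"])
    moreover have "k \<noteq> j"
    proof
      assume "k = j" then show False using m k neg[rule_format, of m] by simp
    qed
    ultimately show "\<exists>k. k \<noteq> j \<and> E i j \<le> E i k + d k" using m k by (intro exI[of _ k]) auto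
  qed
  show ?thesis using Rk[OF idem rk h1 h2] by blast
qed

lemma diag0:
  fixes E :: "('n::finite) tmat"
  assumes idem: "tmult E E = E" and rk: "trank E = card (UNIV :: 'n set)"
  shows "E j j = 0"
proof -
  have "E j j + E j j \<le> E j j" by (rule ent_le[OF idem])
  hence le0: "E j j \<le> 0" by simp
  show ?thesis
  proof (rule ccontr)
    assume "E j j \<noteq> 0" hence neg: "E j j < 0" using le0 by simp
    have h1: "\<forall>i. \<exists>k. k \<noteq> j \<and> E i j \<le> E i k + E k j"
    proof
      fix i
      obtain k where k: "E i j = E i k + E k j" using ent[OF idem, of i j] mx_ex by metis
      have "k \<noteq> j" using k neg by auto
      thus "\<exists>k. k \<noteq> j \<and> E i j \<le> E i k + E k j" using k by auto
    qed
    show False using Rk[OF idem rk h1] by simp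
  qed
qed

lemma offd:
  fixes E :: "('n::finite) tmat"
  assumes idem: "tmult E E = E" and rk: "trank E = card (UNIV :: 'n set)" and kj: "k \<noteq> j"
  shows "E k j + E j k < 0"
proof (rule ccontr)
  assume "\<not> E k j + E j k < 0"
  hence ge: "E k j + E j k \<ge> 0" by simp
  have h1: "\<forall>i. \<exists>k'. k' \<noteq> j \<and> E i j \<le> E i k' + E k' j"
  proof
    fix i
    have "E i j + E j k \<le> E i k" by (rule ent_le[OF idem])
    thus "\<exists>k'. k' \<noteq> j \<and> E i j \<le> E i k' + E k' j" using kj ge by (intro exI[of _ k]) auto
  qed
  show False using Rk[OF idem rk h1] by simp
qed


theorem corollary7p9:
  fixes E :: "('n::finite) tmat"
  assumes "tmult E E = E"
    and "trank E = card (UNIV :: 'n set)"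
  shows "\<exists>x \<in> colspace E. \<forall>A. green_H A E \<longrightarrow> (\<exists>l::real. tapply A x = tscal l x)"
proof -
  note idem = assms(1) and rk = assms(2)
  have diag: "\<forall>j. E j j = 0" using diag0[OF idem rk] by blast
  define n where "n = real (card (UNIV :: 'n set))"
  have npos: "n > 0" unfolding n_def by (simp add: card_gt_0_iff)
  define c where "c j = - (\<Sum>m\<in>UNIV. E m j) / n" for j
  define x where "x = tapply E c"
  have xcs: "x \<in> colspace E"
  proof -
    have "(\<lambda>i. Max ((\<lambda>k. c k + (\<lambda>i. E i k) i) ` UNIV)) \<in> tspan ((\<lambda>k i. E i k) ` UNIV)"
      by (rule span_rep) auto
    moreover have "x = (\<lambda>i. Max ((\<lambda>k. c k + (\<lambda>i. E i k) i) ` UNIV))"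
      unfolding x_def tapply_def by (simp add: add.commute)
    moreover have "(\<lambda>k i. E i k) ` UNIV = {(\<lambda>i. E i j) | j. True}" by auto
    ultimately show ?thesis unfolding colspace_def by simp
  qed
  show ?thesis
  proof (intro bexI[OF _ xcs] allI impI)
    fix A assume H: "green_H A E"
    obtain B where AB: "tmult A B = E" and BA: "tmult B A = E" and EB: "tmult E B = B" and BE: "tmult B E = B"
      using H_facts(3)[OF idem H] by blast
    have EA: "tmult E A = A" and AE: "tmult A E = A" using H_facts(1,2)[OF idem H] by auto
    have S3: "\<exists>l. \<forall>i. A i k = A l k + E i l" for k
    proof -
      define w where "w l = (\<lambda>i. A l k + B i l)" for l
      have fx: "\<forall>l. tapply E (w l) = w l"
      proof (intro allI ext)
        fix l i
        have "tapply E (w l) i = Max (range (\<lambda>m. E i m + (A l k + B m l)))"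
          unfolding tapply_def w_def by simp
        also have "\<dots> = Max (range (\<lambda>m. A l k + (E i m + B m l)))"
          by (simp only: add.left_commute)
        also have "\<dots> = A l k + Max (range (\<lambda>m. E i m + B m l))" by (rule mx_add)
        also have "\<dots> = A l k + B i l" by (simp only: ent[OF EB, of i l, symmetric])
        finally show "tapply E (w l) i = w l i" unfolding w_def .
      qed
      have le: "\<forall>l i. w l i \<le> E i k" unfolding w_def using ent_le[OF BA] by (simp add: add.commute)
      have cov: "\<forall>i. \<exists>l. E i k \<le> w l i"
      proof
        fix i
        obtain l where "E i k = B i l + A l k" using ent[OF BA, of i k] mx_ex by metis
        thus "\<exists>l. E i k \<le> w l i" unfolding w_def by (intro exI[of _ l]) simp
      qed
      obtain l where l: "\<forall>i. w l i = E i k" using Ext[OF idem rk diag fx le cov] by blast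
      have "A i k = A l k + E i l" for i
      proof -
        have "A i k = Max (range (\<lambda>m. A i m + E m k))" by (rule ent[OF AE])
        also have "\<dots> = Max (range (\<lambda>m. A l k + (A i m + B m l)))"
        proof -
          have Em: "\<And>m. E m k = A l k + B m l" using l unfolding w_def by simp
          show ?thesis by (simp only: Em add.left_commute)
        qed
        also have "\<dots> = A l k + E i l" by (subst mx_add) (simp only: ent[OF AB, of i l, symmetric])
        finally show ?thesis .
      qed
      thus ?thesis by blast
    qed
    then have "\<exists>\<sigma>. \<forall>k. \<forall>i. A i k = A (\<sigma> k) k + E i (\<sigma> k)" by (intro choice) blast
    then obtain \<sigma> where sig0: "\<forall>k i. A i k = A (\<sigma> k) k + E i (\<sigma> k)" by blast
    define lam where "lam k = A (\<sigma> k) k" for k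
    have sig: "A i k = lam k + E i (\<sigma> k)" for i k using sig0 unfolding lam_def by blast
    have Bsig: "B k (\<sigma> j) = E k j - lam j" for k j
    proof -
      have "E k j = Max (range (\<lambda>m. B k m + A m j))" by (rule ent[OF BA])
      also have "\<dots> = Max (range (\<lambda>m. lam j + (B k m + E m (\<sigma> j))))"
        by (simp add: sig algebra_simps)
      also have "\<dots> = lam j + B k (\<sigma> j)" by (subst mx_add) (simp only: ent[OF BE, of k "\<sigma> j", symmetric])
      finally show ?thesis by simp
    qed
    have S5: "E (\<sigma> k) (\<sigma> j) = E k j + lam k - lam j" for k j
    proof (rule antisym)
      have "A (\<sigma> k) k + E k j \<le> A (\<sigma> k) j" by (rule ent_le[OF AE])
      thus "E k j + lam k - lam j \<le> E (\<sigma> k) (\<sigma> j)" using sig[of "\<sigma> k" k] sig[of "\<sigma> k" j] diag by simp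
    next
      have "B k (\<sigma> k) + A (\<sigma> k) j \<le> E k j" by (rule ent_le[OF BA])
      thus "E (\<sigma> k) (\<sigma> j) \<le> E k j + lam k - lam j" using Bsig[of k k] sig[of "\<sigma> k" j] diag by simp
    qed
    have inj: "inj \<sigma>"
    proof (rule injI, rule ccontr)
      fix k j assume eq: "\<sigma> k = \<sigma> j" and ne: "k \<noteq> j"
      have "E (\<sigma> k) (\<sigma> j) = 0" "E (\<sigma> j) (\<sigma> k) = 0" using eq diag by auto
      hence "E k j + E j k = 0" using S5[of k j] S5[of j k] by simp
      thus False using offd[OF idem rk ne] by simp
    qed
    have surj: "range \<sigma> = UNIV" using inj finite_UNIV_inj_surj[of \<sigma>] by simp
    define Lam where "Lam = (\<Sum>k\<in>UNIV. lam k)"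
    define mu where "mu = Lam / n"
    have key: "lam j + c j = mu + c (\<sigma> j)" for j
    proof -
      have "(\<Sum>m\<in>UNIV. E m (\<sigma> j)) = (\<Sum>k\<in>UNIV. E (\<sigma> k) (\<sigma> j))"
        using sum.reindex[OF inj, of "\<lambda>m. E m (\<sigma> j)"] surj by simp
      also have "\<dots> = (\<Sum>k\<in>UNIV. E k j + lam k - lam j)" by (simp add: S5)
      also have "\<dots> = (\<Sum>k\<in>UNIV. E k j) + Lam - n * lam j"
        unfolding Lam_def n_def by (simp add: sum.distrib sum_subtractf)
      finally have "(\<Sum>m\<in>UNIV. E m (\<sigma> j)) = (\<Sum>k\<in>UNIV. E k j) + Lam - n * lam j" .
      thus ?thesis unfolding c_def mu_def using npos by (simp add: field_simps)
    qed
    have rg: "range (\<lambda>j. g (\<sigma> j)) = range g" for g :: "'n \<Rightarrow> real"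
      by (metis image_image surj)
    have "tapply A x = tscal mu x"
    proof (intro ext)
      fix i
      have "tapply A x = tapply A c" unfolding x_def tapply_tmult AE ..
      hence "tapply A x i = Max (range (\<lambda>j. A i j + c j))" unfolding tapply_def by (rule fun_cong)
      also have "\<dots> = Max (range (\<lambda>j. mu + (E i (\<sigma> j) + c (\<sigma> j))))"
      proof -
        have pt: "\<And>j. A i j + c j = mu + (E i (\<sigma> j) + c (\<sigma> j))"
          using sig key by (smt (verit))
        show ?thesis by (simp only: pt)
      qed
      also have "\<dots> = mu + Max (range (\<lambda>j. E i (\<sigma> j) + c (\<sigma> j)))" by (rule mx_add)
      also have "\<dots> = mu + Max (range (\<lambda>m. E i m + c m))"
        using rg[of "\<lambda>m. E i m + c m"] by simp
      also have "\<dots> = tscal mu x i" unfolding tscal_def x_def tapply_def by simp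
      finally show "tapply A x i = tscal mu x i" .
    qed
    thus "\<exists>l. tapply A x = tscal l x" by blast
  qed
qed

end
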